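(* Let $q=3^m$ with $m\ge 1$ and let $f(x)=x^{q+2}$ on $\mathbb{F}_{q^2}$. Then $\beta_f=q+2$. Moreover, if $q\ge 9$, then $$\nu_{q+2}=\begin{cases}\frac{q-1}{2},& m \text{ even},\\ \frac{q+1}{2},& m\text{ odd},\end{cases}\qquad \nu_q=\begin{cases}\frac{q-1}{2},& m \text{ even},\\ \frac{q-3}{2},& m\text{ odd}.\end{cases}$$
   Context: For $f:\mathbb{F}_{q^2}\to\mathbb{F}_{q^2}$ and $a,b\in\mathbb{F}_{q^2}$, $\beta_f(a,b)$ is the number of $(x,y)\in\mathbb{F}_{q^2}^2$ with $f(x)-f(y)=b$ and $f(x+a)-f(y+a)=b$; $\beta_f=\max_{a,b\in\mathbb{F}_{q^2}^*}\beta_f(a,b)$. For the power function $f$, the boomerang spectrum is taken with $a=1$: $\nu_i=\#\{b\in\mathbb{F}_{q^2}^*:\ \beta_f(1,b)=i\}$. *)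

theory Defs
  imports Main
begin

definition boomerang_count :: "('a::{field,finite} \<Rightarrow> 'a) \<Rightarrow> 'a \<Rightarrow> 'a \<Rightarrow> nat" where
  "boomerang_count f a b = card {(x, y). f x - f y = b \<and> f (x + a) - f (y + a) = b}"

definition boomerang_uniformity :: "('a::{field,finite} \<Rightarrow> 'a) \<Rightarrow> nat" where
  "boomerang_uniformity f = Max {boomerang_count f a b | a b. a \<noteq> 0 \<and> b \<noteq> 0}"

definition boomerang_spectrum :: "('a::{field,finite} \<Rightarrow> 'a) \<Rightarrow> nat \<Rightarrow> nat" where
  "boomerang_spectrum f i = card {b. b \<noteq> 0 \<and> boomerang_count f 1 b = i}"

end

theory Submission
  imports Defs "HOL-Computational_Algebra.Polynomial"
begin


lemma fiber_card:
  assumes "finite A" and "\<And>x. x \<in> A \<Longrightarrow> card {y\<in>A. g y = g x} = k"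
  shows "card A = k * card (g ` A)"
proof -
  let ?C = "(\<lambda>z. {y\<in>A. g y = z}) ` (g ` A)"
  have U: "\<Union>?C = A" by auto
  have "k * card ?C = card (\<Union>?C)"
    by (rule card_partition) (use assms in auto)
  moreover have "card ?C = card (g ` A)"
  proof (rule card_image)
    show "inj_on (\<lambda>z. {y\<in>A. g y = z}) (g ` A)"
    proof (rule inj_onI)
      fix z1 z2 assume "z1 \<in> g ` A" "z2 \<in> g ` A" and e: "{y\<in>A. g y = z1} = {y\<in>A. g y = z2}"
      then obtain a where "a \<in> A" "g a = z1" by auto
      hence "a \<in> {y\<in>A. g y = z2}" using e by blast
      thus "z1 = z2" using \<open>g a = z1\<close> by simp
    qed
  qed
  ultimately show ?thesis using U by simp
qed

lemma char3:
  assumes "card (UNIV :: 'a::{field,finite} set) = 3 ^ n" "n > 0"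
  shows "(3::'a) = 0"
proof -
  have "(\<Sum>y\<in>UNIV. y + 1) = (\<Sum>y\<in>(\<lambda>y. y + 1) ` UNIV. y :: 'a)"
    by (subst sum.reindex) (auto simp: inj_on_def)
  also have "(\<lambda>y. y + (1::'a)) ` UNIV = UNIV"
  proof (rule surjI)
    fix z :: 'a show "(z - 1) + 1 = z" by simp
  qed
  finally have e: "(\<Sum>y\<in>UNIV. y + 1) = (\<Sum>y\<in>UNIV. y :: 'a)" by simp
  have "(\<Sum>y\<in>UNIV. y + 1) = (\<Sum>y\<in>UNIV. y) + (\<Sum>y\<in>(UNIV::'a set). (1::'a))"
    by (simp add: sum.distrib)
  hence "(\<Sum>y\<in>UNIV. y) + of_nat (card (UNIV::'a set)) = (\<Sum>y\<in>UNIV. y :: 'a)"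
    using e by simp
  hence "of_nat (3 ^ n) = (0::'a)" using assms by simp
  hence "(3::'a) ^ n = 0" by simp
  thus ?thesis by simp
qed

lemma fermat_field:
  fixes x :: "'a::{field,finite}"
  shows "x ^ card (UNIV :: 'a set) = x"
proof (cases "x = 0")
  case True
  have "card (UNIV::'a set) > 0" by (simp add: card_gt_0_iff)
  thus ?thesis using True by (simp add: zero_power)
next
  case False
  let ?U = "UNIV - {0::'a}"
  have "(\<Prod>y\<in>?U. x * y) = (\<Prod>y\<in>(\<lambda>y. x * y) ` ?U. y)"
    by (subst prod.reindex) (use False in \<open>auto simp: inj_on_def\<close>)
  also have "(\<lambda>y. x * y) ` ?U = ?U"
  proof
    show "(*) x ` ?U \<subseteq> ?U" using False by auto
    show "?U \<subseteq> (*) x ` ?U"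
    proof
      fix z assume "z \<in> ?U"
      hence "z = x * (z / x)" "z / x \<in> ?U" using False by auto
      thus "z \<in> (*) x ` ?U" by blast
    qed
  qed
  finally have e: "(\<Prod>y\<in>?U. x * y) = (\<Prod>y\<in>?U. y)" by simp
  have "(\<Prod>y\<in>?U. x * y) = (\<Prod>y\<in>?U. x) * (\<Prod>y\<in>?U. y)"
    by (rule prod.distrib)
  hence "x ^ card ?U * (\<Prod>y\<in>?U. y) = (\<Prod>y\<in>?U. y)" using e by simp
  moreover have "(\<Prod>y\<in>?U. y) \<noteq> 0" by (subst prod_zero_iff) auto
  ultimately have x1: "x ^ card ?U = 1" by simp
  have "card (UNIV::'a set) = Suc (card ?U)"
    by (rule card_Suc_Diff1[symmetric]) auto
  hence "x ^ card (UNIV::'a set) = x * x ^ card ?U" by (simp only: power_Suc)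
  thus ?thesis using x1 by simp
qed

lemma roots_xn:
  fixes c d :: "'a::{field,finite}"
  assumes "n \<ge> 2"
  shows "card {x. x ^ n + c * x + d = 0} \<le> n"
proof -
  let ?p = "[:d, c:] + monom 1 n"
  have dg: "degree ?p = n"
  proof -
    have "degree [:d, c:] < degree (monom (1::'a) n)" using assms
      by (simp add: degree_monom_eq)
    thus ?thesis by (simp add: degree_add_eq_right degree_monom_eq)
  qed
  have "?p \<noteq> 0" using dg assms by auto
  hence "card {x. poly ?p x = 0} \<le> degree ?p" by (rule card_poly_roots_bound)
  moreover have "{x. poly ?p x = 0} = {x. x ^ n + c * x + d = 0}"
    by (auto simp: poly_monom algebra_simps)
  ultimately show ?thesis using dg by simp
qed

lemma roots_pow1:
  fixes c :: "'a::{field,finite}"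
  assumes "n \<ge> 1"
  shows "card {x. x ^ n = c} \<le> n"
proof -
  let ?p = "[:- c:] + monom 1 n"
  have dg: "degree ?p = n"
  proof -
    have "degree [:- c:] < degree (monom (1::'a) n)" using assms
      by (simp add: degree_monom_eq)
    thus ?thesis by (simp add: degree_add_eq_right degree_monom_eq)
  qed
  have "?p \<noteq> 0" using dg assms by auto
  hence "card {x. poly ?p x = 0} \<le> degree ?p" by (rule card_poly_roots_bound)
  moreover have "{x. poly ?p x = 0} = {x. x ^ n = c}"
    by (auto simp: poly_monom algebra_simps)
  ultimately show ?thesis using dg by simp
qed

lemma roots_quintic:
  fixes a0 a1 a2 a3 a4 :: "'a::{field,finite}"
  shows "card {x. a0 + x * (a1 + x * (a2 + x * (a3 + x * (a4 + x * (-1))))) = 0} \<le> 5"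
proof -
  let ?p = "[:a0, a1, a2, a3, a4, -1:]"
  have dg: "degree ?p = 5" by simp
  have "?p \<noteq> 0" by simp
  hence "card {x. poly ?p x = 0} \<le> degree ?p" by (rule card_poly_roots_bound)
  thus ?thesis using dg by simp
qed

lemma euler_gen:
  fixes S :: "'a::{field,finite} set" and k :: nat
  assumes two: "(2::'a) \<noteq> 0" and neg: "\<And>y. y \<in> S \<Longrightarrow> - y \<in> S"
    and cS: "card (S - {0}) = k - 1" and kodd: "odd k" and k3: "k \<ge> 3"
    and ferm: "\<And>y. y \<in> S \<Longrightarrow> y \<noteq> 0 \<Longrightarrow> y ^ (k - 1) = 1"
    and z: "z ^ ((k - 1) div 2) = 1"
  shows "\<exists>y\<in>S. y \<noteq> 0 \<and> y ^ 2 = z"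
proof -
  let ?S = "S - {0}" and ?n = "(k - 1) div 2"
  have fib: "card {y\<in>?S. y ^ 2 = x ^ 2} = 2" if "x \<in> ?S" for x
  proof -
    have "{y\<in>?S. y ^ 2 = x ^ 2} = {x, -x}"
    proof
      show "{y\<in>?S. y ^ 2 = x ^ 2} \<subseteq> {x, -x}"
      proof
        fix y assume "y \<in> {y\<in>?S. y ^ 2 = x ^ 2}"
        hence "(y - x) * (y + x) = 0" by (simp add: algebra_simps power2_eq_square)
        thus "y \<in> {x, -x}" by (auto simp: add_eq_0_iff2)
      qed
      show "{x, -x} \<subseteq> {y\<in>?S. y ^ 2 = x ^ 2}" using that neg by auto
    qed
    moreover have "x \<noteq> -x"
    proof
      assume xx: "x = -x" have "2 * x = x + x" by (rule mult_2)
      also have "x + x = x + - x" using xx by (rule arg_cong[where f="(+) x"])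
      finally have "2 * x = 0" by simp
      thus False using two that by simp
    qed
    ultimately show ?thesis by simp
  qed
  have "card ?S = 2 * card ((\<lambda>y. y ^ 2) ` ?S)"
    by (rule fiber_card) (use fib in auto)
  hence cimg: "card ((\<lambda>y. y ^ 2) ` ?S) = ?n" using cS by simp
  have sub: "(\<lambda>y. y ^ 2) ` ?S \<subseteq> {x. x ^ ?n = 1}"
  proof
    fix w assume "w \<in> (\<lambda>y. y ^ 2) ` ?S"
    then obtain y where y: "y \<in> ?S" "w = y ^ 2" by auto
    have "w ^ ?n = y ^ (2 * ?n)" using y by (simp add: power_mult)
    also have "2 * ?n = k - 1" using kodd by simp
    finally show "w \<in> {x. x ^ ?n = 1}" using ferm y by simp
  qed
  have "card {x::'a. x ^ ?n = 1} \<le> ?n" by (rule roots_pow1) (use k3 in auto)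
  hence "(\<lambda>y. y ^ 2) ` ?S = {x. x ^ ?n = 1}"
    using sub cimg by (intro card_subset_eq) (auto dest: card_mono[rotated])
  hence "z \<in> (\<lambda>y. y ^ 2) ` ?S" using z by auto
  thus ?thesis by auto
qed



locale fsetting =
  fixes m q :: nat and tt :: "'a::{field,finite} itself"
  assumes m1: "m \<ge> 1" and qdef: "q = 3 ^ m"
    and cardq: "card (UNIV :: 'a set) = q ^ 2"
begin

lemma q3: "q \<ge> 3"
proof -
  have "(3::nat) ^ 1 \<le> 3 ^ m" using m1 by (intro power_increasing) auto
  thus ?thesis using qdef by simp
qed

lemma qodd: "odd q" using qdef by simp

lemma three: "(3::'a) = 0"
proof -
  have "card (UNIV :: 'a set) = 3 ^ (2 * m)" using cardq qdef by (simp add: power_mult mult.commute)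
  thus ?thesis using char3[of "2*m"] m1 by simp
qed

lemma two: "(2::'a) = -1"
proof -
  have "(2::'a) + 1 = 3" by simp
  hence "(2::'a) + 1 = 0" using three by simp
  thus ?thesis by (simp add: add_eq_0_iff2)
qed

lemma two_ne: "(2::'a) \<noteq> 0"
proof
  assume "(2::'a) = 0"
  hence "(2::'a) + 1 = 1" by simp
  thus False using three by simp
qed

lemma frob3: "((x::'a) + y) ^ 3 = x ^ 3 + y ^ 3"
proof -
  have "(x + y) ^ 3 = x ^ 3 + y ^ 3 + 3 * (x * x * y + x * y * y)"
    by (simp add: power3_eq_cube algebra_simps)
  thus ?thesis using three by simp
qed

lemma frob3_diff: "((x::'a) - y) ^ 3 = x ^ 3 - y ^ 3"
  using frob3[of x "-y"] by (simp add: power3_eq_cube)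

lemma frobk: "((x::'a) + y) ^ (3 ^ k) = x ^ (3 ^ k) + y ^ (3 ^ k)"
proof (induction k)
  case 0 thus ?case by simp
next
  case (Suc k)
  have "(x + y) ^ (3 ^ Suc k) = ((x + y) ^ (3 ^ k)) ^ 3" by (simp add: power_mult[symmetric] mult.commute)
  also have "\<dots> = (x ^ (3 ^ k)) ^ 3 + (y ^ (3 ^ k)) ^ 3" using Suc by (simp add: frob3)
  also have "\<dots> = x ^ (3 ^ Suc k) + y ^ (3 ^ Suc k)" by (simp add: power_mult[symmetric] mult.commute)
  finally show ?case .
qed

lemma cj_add: "((x::'a) + y) ^ q = x ^ q + y ^ q"
  using frobk[of x y m] qdef by simp

lemma cj_neg: "(- (x::'a)) ^ q = - (x ^ q)"
  using qodd by simp

lemma cj_diff: "((x::'a) - y) ^ q = x ^ q - y ^ q"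
  using cj_add[of x "-y"] cj_neg[of y] by simp

lemma cj_mult: "((x::'a) * y) ^ q = x ^ q * y ^ q"
  by (simp add: power_mult_distrib)

lemma cj_cj: "((x::'a) ^ q) ^ q = x"
proof -
  have "(x ^ q) ^ q = x ^ (q ^ 2)" by (simp add: power_mult[symmetric] power2_eq_square)
  also have "\<dots> = x" using fermat_field[of x] cardq by simp
  finally show ?thesis .
qed

lemma cj_one: "(1::'a) ^ q = 1" by simp
lemma cj_m1: "(-1::'a) ^ q = -1" using qodd by simp
lemma cj_two: "(2::'a) ^ q = 2" using cj_m1 by (simp only: two)

lemma cj_inv: "(inverse (x::'a)) ^ q = inverse (x ^ q)"
  by (simp add: power_inverse)

lemma cube_inj: "(x::'a) ^ 3 = y ^ 3 \<Longrightarrow> x = y"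
  using frob3_diff[of x y] by simp

lemma cube_root: "\<exists>c::'a. c ^ 3 = b"
proof -
  have "inj (\<lambda>x::'a. x ^ 3)" by (rule injI) (rule cube_inj)
  hence "surj (\<lambda>x::'a. x ^ 3)" by (rule finite_UNIV_inj_surj[OF finite_UNIV])
  thus ?thesis by (metis surjD)
qed

lemma cube_K: "(c::'a) ^ 3 = b \<Longrightarrow> b ^ q = b \<Longrightarrow> c ^ q = c"
proof -
  assume c: "c ^ 3 = b" and b: "b ^ q = b"
  have "(c ^ q) ^ 3 = (c ^ 3) ^ q" by (simp add: power_mult[symmetric] mult.commute)
  thus ?thesis using c b by (simp add: cube_inj)
qed

lemma K_card: "card {x::'a. x ^ q = x} = q"
proof -
  let ?K = "{x::'a. x ^ q = x}"
  have up: "card ?K \<le> q"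
  proof -
    have "?K = {x. x ^ q + (-1) * x + 0 = 0}" by auto
    thus ?thesis using roots_xn[of q "-1::'a" 0] q3 by simp
  qed
  let ?g = "\<lambda>x::'a. x ^ q - x"
  have fib: "card {y. ?g y = ?g x} = card ?K" for x
  proof -
    have "{y. ?g y = ?g x} = (\<lambda>k. k + x) ` ?K"
    proof
      show "{y. ?g y = ?g x} \<subseteq> (\<lambda>k. k + x) ` ?K"
      proof
        fix y assume "y \<in> {y. ?g y = ?g x}"
        hence "(y - x) ^ q = y - x" by (simp add: cj_diff algebra_simps)
        hence "y - x \<in> ?K" by simp
        moreover have "y = (y - x) + x" by simp
        ultimately show "y \<in> (\<lambda>k. k + x) ` ?K" by blast
      qed
      show "(\<lambda>k. k + x) ` ?K \<subseteq> {y. ?g y = ?g x}"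
        by (auto simp: cj_add)
    qed
    moreover have "inj_on (\<lambda>k. k + x) ?K" by (auto simp: inj_on_def)
    ultimately show ?thesis by (simp add: card_image)
  qed
  have "card (UNIV::'a set) = card ?K * card (range ?g)"
    by (rule fiber_card) (use fib in auto)
  moreover have "card (range ?g) \<le> q"
  proof -
    have "range ?g \<subseteq> {y. y ^ q + 1 * y + 0 = 0}"
      by (auto simp: cj_diff cj_cj)
    hence "card (range ?g) \<le> card {y::'a. y ^ q + 1 * y + 0 = 0}"
      by (intro card_mono) auto
    thus ?thesis using roots_xn[of q "1::'a" 0] q3 by simp
  qed
  ultimately have "q * q \<le> card ?K * q" using cardq by (simp add: power2_eq_square)
  hence "q \<le> card ?K" using q3 by simp
  thus ?thesis using up by simp
qed

lemma K_star_card: "card ({x::'a. x ^ q = x} - {0}) = q - 1"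
proof -
  have "(0::'a) \<in> {x. x ^ q = x}" using q3 by (simp add: zero_power)
  thus ?thesis using K_card by (simp add: card_Diff_singleton)
qed

lemma K_ferm: "(y::'a) ^ q = y \<Longrightarrow> y \<noteq> 0 \<Longrightarrow> y ^ (q - 1) = 1"
proof -
  assume "y ^ q = y" "y \<noteq> 0"
  moreover have "y ^ q = y * y ^ (q - 1)" using q3 by (cases q) auto
  ultimately show ?thesis by simp
qed

lemma sq_in_L: "(d::'a) ^ q = d \<Longrightarrow> d \<noteq> 0 \<Longrightarrow> \<exists>r. r ^ 2 = d"
proof -
  assume d: "d ^ q = d" "d \<noteq> 0"
  obtain j where j: "q = 2 * j + 1" using qodd oddE by blast
  have ex: "(q ^ 2 - 1) div 2 = (q - 1) * (j + 1)" using j by (simp add: power2_eq_square algebra_simps)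
  have "d ^ ((q ^ 2 - 1) div 2) = (d ^ (q - 1)) ^ (j + 1)" by (simp only: ex power_mult)
  also have "\<dots> = 1" using K_ferm d by simp
  finally have z: "d ^ ((q ^ 2 - 1) div 2) = 1" .
  have ferm: "y ^ (q ^ 2 - 1) = 1" if "y \<noteq> 0" for y :: 'a
  proof -
    have "y ^ (q ^ 2) = y" using fermat_field[of y] cardq by simp
    moreover have "q ^ 2 \<noteq> 0" using q3 by simp
    hence "y ^ (q ^ 2) = y * y ^ (q ^ 2 - 1)" by (cases "q ^ 2") auto
    ultimately show ?thesis using that by simp
  qed
  have "\<exists>y\<in>(UNIV::'a set). y \<noteq> 0 \<and> y ^ 2 = d"
  proof (rule euler_gen[OF two_ne, of UNIV "q^2"])
    show "card ((UNIV::'a set) - {0}) = q ^ 2 - 1" using cardq by (simp add: card_Diff_singleton)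
    show "odd (q ^ 2)" using qodd by simp
    show "q ^ 2 \<ge> 3" using q3 by (metis le_trans power2_nat_le_imp_le not_le power2_eq_square le_square)
  qed (use ferm z in auto)
  thus ?thesis by auto
qed

lemma q_mod4: "q mod 4 = (if even m then 1 else 3)"
proof -
  have "(3::nat) ^ n mod 4 = (if even n then 1 else 3)" for n
  proof (induction n)
    case 0 thus ?case by simp
  next
    case (Suc n)
    have "(3::nat) ^ Suc n mod 4 = (3 * (3 ^ n mod 4)) mod 4" by (simp add: mod_mult_right_eq)
    thus ?case using Suc by auto
  qed
  thus ?thesis using qdef by simp
qed

lemma minus1_sq_even: "even m \<Longrightarrow> \<exists>i::'a. i ^ q = i \<and> i ^ 2 = -1"
proof -
  assume "even m"
  hence "q mod 4 = 1" using q_mod4 by simp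
  hence ev: "even ((q - 1) div 2)" by presburger
  have "\<exists>y\<in>{x::'a. x ^ q = x}. y \<noteq> 0 \<and> y ^ 2 = -1"
  proof (rule euler_gen[OF two_ne, of _ q])
    show "card ({x::'a. x ^ q = x} - {0}) = q - 1" by (rule K_star_card)
    show "(-1::'a) ^ ((q - 1) div 2) = 1" using ev by simp
  qed (use qodd q3 K_ferm cj_neg in auto)
  thus ?thesis by auto
qed

lemma minus1_sq_odd: "odd m \<Longrightarrow> (i::'a) ^ q = i \<Longrightarrow> i ^ 2 \<noteq> -1"
proof
  assume "odd m" "i ^ q = i" "i ^ 2 = -1"
  hence "q mod 4 = 3" using q_mod4 by simp
  hence od: "odd ((q - 1) div 2)" and e2: "q - 1 = 2 * ((q - 1) div 2)" by presburger+
  have "i \<noteq> 0" using \<open>i ^ 2 = -1\<close> by auto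
  hence "i ^ (q - 1) = 1" using K_ferm \<open>i ^ q = i\<close> by simp
  moreover have "i ^ (q - 1) = (i ^ 2) ^ ((q - 1) div 2)" by (subst e2) (simp add: power_mult)
  ultimately have "(-1::'a) ^ ((q - 1) div 2) = 1" using \<open>i ^ 2 = -1\<close> by simp
  hence "(-1::'a) = 1" using od by simp
  hence "(2::'a) = 0" by (metis one_add_one add.right_inverse)
  thus False using two_ne by simp
qed

lemma fK: "(x::'a) ^ q = x \<Longrightarrow> x ^ (q + 2) = x ^ 3"
  by (simp add: power_add power2_eq_square power3_eq_cube)

lemma Dlem: "((u::'a) + 2) ^ (q + 2) - (u + 1) ^ (q + 2) = u * (u - u ^ q) + 1"
proof -
  define w where "w = u ^ q"
  have a: "(u + 2) ^ q = w + 2" by (simp add: cj_add cj_two w_def)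
  have b: "(u + 1) ^ q = w + 1" by (simp add: cj_add w_def)
  have "(u + 2) ^ (q + 2) - (u + 1) ^ (q + 2) = (w + 2) * (u + 2) ^ 2 - (w + 1) * (u + 1) ^ 2"
    by (simp only: power_add a b)
  also have "\<dots> = u * (u - w) + 1 + 3 * (u * w + w + 2 * u + 2)"
    by (simp add: algebra_simps power2_eq_square)
  finally show ?thesis using three by (simp add: w_def)
qed

lemma hlem: "((u::'a) + 1) ^ (q + 2) - (1 - u) ^ (q + 2) = u - u ^ q * (u ^ 2 + 1)"
proof -
  define w where "w = u ^ q"
  have a: "(1 - u) ^ q = 1 - w" by (simp add: cj_diff w_def)
  have b: "(u + 1) ^ q = w + 1" by (simp add: cj_add w_def)
  have "(u + 1) ^ (q + 2) - (1 - u) ^ (q + 2) = (w + 1) * (u + 1) ^ 2 - (1 - w) * (1 - u) ^ 2"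
    by (simp only: power_add a b)
  also have "\<dots> = u - w * (u ^ 2 + 1) + 3 * (w * u ^ 2 + w + u)"
    by (simp add: algebra_simps power2_eq_square)
  finally show ?thesis using three by (simp add: w_def)
qed

lemma Eeq:
  assumes e: "(u::'a) * (u - u ^ q) = v * (v - v ^ q)"
  shows "v = u \<or> v = - u \<or> (u ^ q = u \<and> v ^ q = v)"
proof -
  define Wu where "Wu = u - u ^ q"
  define Wv where "Wv = v - v ^ q"
  have c: "(x * (x - x ^ q)) ^ q = x ^ q * (x ^ q - x)" for x :: 'a
    by (simp add: cj_mult cj_diff cj_cj)
  have sq: "x * (x - x ^ q) + x ^ q * (x ^ q - x) = (x - x ^ q) ^ 2" for x :: 'a
    by (simp add: algebra_simps power2_eq_square)
  have "Wu ^ 2 = Wv ^ 2"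
    using sq[of u] sq[of v] c[of u] c[of v] e unfolding Wu_def Wv_def by metis
  hence "(Wu - Wv) * (Wu + Wv) = 0" by (simp add: algebra_simps power2_eq_square)
  hence "Wv = Wu \<or> Wv = - Wu" by (auto simp: add_eq_0_iff2)
  moreover have e2: "u * Wu = v * Wv" using e unfolding Wu_def Wv_def .
  ultimately show ?thesis
  proof (elim disjE)
    assume "Wv = Wu"
    show ?thesis
    proof (cases "Wu = 0")
      case True thus ?thesis using \<open>Wv = Wu\<close> unfolding Wu_def Wv_def by simp
    next
      case False thus ?thesis using e2 \<open>Wv = Wu\<close> by simp
    qed
  next
    assume "Wv = - Wu"
    show ?thesis
    proof (cases "Wu = 0")
      case True thus ?thesis using \<open>Wv = - Wu\<close> unfolding Wu_def Wv_def by simp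
    next
      case False
      have "u * Wu = (- v) * Wu" using e2 \<open>Wv = - Wu\<close> by simp
      hence "u = - v" using False by (metis mult_cancel_right)
      thus ?thesis by simp
    qed
  qed
qed

lemma Hbound: "card {u::'a. u - u ^ q * (u ^ 2 + 1) = b} \<le> 5"
proof -
  define cb where "cb = b ^ q"
  let ?P = "\<lambda>x. (- (b + cb)) + x * ((- (b ^ 2)) + x * ((b - 2 * cb) + x * ((- 2) + x * ((- cb) + x * (-1)))))"
  have "{u::'a. u - u ^ q * (u ^ 2 + 1) = b} \<subseteq> {x. ?P x = 0}"
  proof
    fix u assume "u \<in> {u::'a. u - u ^ q * (u ^ 2 + 1) = b}"
    hence e1: "u ^ q * (u ^ 2 + 1) = u - b" by (simp add: algebra_simps)
    define w where "w = u ^ q"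
    have e1': "w * (u ^ 2 + 1) = u - b" using e1 w_def by simp
    have "(u - u ^ q * (u ^ 2 + 1)) ^ q = b ^ q" using e1 by simp
    hence e2: "w - u * (w ^ 2 + 1) = cb"
      by (simp add: cj_diff cj_mult cj_add cj_cj w_def cb_def power2_eq_square)
    have "(u ^ 2 + 1) ^ 2 * (w - u * (w ^ 2 + 1) - cb) =
          (w * (u ^ 2 + 1)) * (u ^ 2 + 1) - u * (w * (u ^ 2 + 1)) ^ 2 - u * (u ^ 2 + 1) ^ 2 - cb * (u ^ 2 + 1) ^ 2"
      by (simp add: algebra_simps power2_eq_square)
    also have "\<dots> = (u - b) * (u ^ 2 + 1) - u * (u - b) ^ 2 - u * (u ^ 2 + 1) ^ 2 - cb * (u ^ 2 + 1) ^ 2"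
      by (simp only: e1')
    also have "\<dots> = ?P u"
      by (simp add: algebra_simps power2_eq_square)
    finally have "?P u = 0" using e2 by simp
    thus "u \<in> {x. ?P x = 0}" by simp
  qed
  hence "card {u::'a. u - u ^ q * (u ^ 2 + 1) = b} \<le> card {x. ?P x = 0}"
    by (intro card_mono) auto
  also have "\<dots> \<le> 5" by (rule roots_quintic)
  finally show ?thesis .
qed

lemma ring_id: "(X::'b::ab_group_add) - Z = (X - Y) - (Z - W) + (Y - W)"
  by (simp add: algebra_simps)

lemma E_neg: "(- (u::'a)) * (- u - (- u) ^ q) = u * (u - u ^ q)"
  by (simp add: cj_neg algebra_simps)

lemma hK: "(u::'a) ^ q = u \<Longrightarrow> u - u ^ q * (u ^ 2 + 1) = - (u ^ 3)"
  by (simp add: algebra_simps power2_eq_square power3_eq_cube)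

lemma count_main:
  assumes b0: "(b::'a) \<noteq> 0"
  shows "card {(x, y). x ^ (q + 2) - y ^ (q + 2) = b \<and> (x + 1) ^ (q + 2) - (y + 1) ^ (q + 2) = b}
         = card {u::'a. u - u ^ q * (u ^ 2 + 1) = b} + (if b ^ q = b then q - 1 else 0)"
proof -
  let ?B = "{(x, y). x ^ (q + 2) - y ^ (q + 2) = b \<and> (x + 1) ^ (q + 2) - (y + 1) ^ (q + 2) = b}"
  let ?H = "{u::'a. u - u ^ q * (u ^ 2 + 1) = b}"
  let ?T1 = "(\<lambda>u. (u + 1, 1 - u)) ` ?H"
  let ?T2 = "{(x, y). x ^ q = x \<and> y ^ q = y \<and> (x - y) ^ 3 = b}"
  have D': "(x + 1) ^ (q + 2) - x ^ (q + 2) = (x - 1) * ((x - 1) - (x - 1) ^ q) + 1" for x :: 'a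
    using Dlem[of "x - 1"] by (simp add: two algebra_simps)
  have BT: "?B = ?T1 \<union> ?T2"
  proof
    show "?B \<subseteq> ?T1 \<union> ?T2"
    proof
      fix p assume "p \<in> ?B"
      then obtain x y where p: "p = (x, y)" and e1: "x ^ (q + 2) - y ^ (q + 2) = b"
        and e2: "(x + 1) ^ (q + 2) - (y + 1) ^ (q + 2) = b" by auto
      define u where "u = x - 1"
      define v where "v = y - 1"
      have "(x + 1) ^ (q + 2) - x ^ (q + 2) = (y + 1) ^ (q + 2) - y ^ (q + 2)"
        using e1 e2 by (simp add: algebra_simps)
      hence "u * (u - u ^ q) = v * (v - v ^ q)" using D'[of x] D'[of y] unfolding u_def v_def by simp
      hence "v = u \<or> v = - u \<or> (u ^ q = u \<and> v ^ q = v)" by (rule Eeq)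
      thus "p \<in> ?T1 \<union> ?T2"
      proof (elim disjE)
        assume "v = u" hence "x = y" unfolding u_def v_def by simp
        thus ?thesis using e1 b0 by simp
      next
        assume "v = - u"
        hence xy: "x = u + 1" "y = 1 - u" unfolding u_def v_def by (simp_all add: algebra_simps)
        hence "u \<in> ?H" using e1 hlem[of u] by simp
        thus ?thesis using p xy by blast
      next
        assume K: "u ^ q = u \<and> v ^ q = v"
        hence xK: "x ^ q = x" and yK: "y ^ q = y" unfolding u_def v_def
          by (simp_all add: cj_diff)
        have fx: "x ^ (q + 2) = x ^ 3" using xK by (rule fK)
        have fy: "y ^ (q + 2) = y ^ 3" using yK by (rule fK)
        have "(x - y) ^ 3 = x ^ 3 - y ^ 3" by (rule frob3_diff)
        also have "\<dots> = x ^ (q + 2) - y ^ (q + 2)" by (simp only: fx fy)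
        also have "\<dots> = b" by (rule e1)
        finally have "(x - y) ^ 3 = b" .
        thus ?thesis using p xK yK by blast
      qed
    qed
  next
    show "?T1 \<union> ?T2 \<subseteq> ?B"
    proof
      fix p assume "p \<in> ?T1 \<union> ?T2"
      thus "p \<in> ?B"
      proof
        assume "p \<in> ?T1"
        then obtain u where p: "p = (u + 1, 1 - u)" and hu: "u - u ^ q * (u ^ 2 + 1) = b" by auto
        have e1: "(u + 1) ^ (q + 2) - (1 - u) ^ (q + 2) = b" using hlem[of u] hu by simp
        have a: "(u + 2) ^ (q + 2) - (u + 1) ^ (q + 2) = u * (u - u ^ q) + 1" by (rule Dlem)
        have c: "((- u) + 2) ^ (q + 2) - ((- u) + 1) ^ (q + 2) = u * (u - u ^ q) + 1"
          using Dlem[of "- u"] E_neg[of u] by simp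
        have "(u + 1 + 1) ^ (q + 2) - (1 - u + 1) ^ (q + 2) = b"
        proof -
          have r1: "u + 1 + 1 = u + 2" and r2: "1 - u + 1 = (- u) + 2" and r3: "(- u) + 1 = 1 - u"
            by (simp_all add: algebra_simps)
          have "(u + 1 + 1) ^ (q + 2) - (1 - u + 1) ^ (q + 2) = (u + 2) ^ (q + 2) - ((- u) + 2) ^ (q + 2)"
            by (simp only: r1 r2)
          also have "\<dots> = ((u + 2) ^ (q + 2) - (u + 1) ^ (q + 2)) - (((- u) + 2) ^ (q + 2) - ((- u) + 1) ^ (q + 2))
               + ((u + 1) ^ (q + 2) - ((- u) + 1) ^ (q + 2))"
            by (rule ring_id)
          also have "\<dots> = (u * (u - u ^ q) + 1) - (u * (u - u ^ q) + 1) + ((u + 1) ^ (q + 2) - ((- u) + 1) ^ (q + 2))"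
            by (simp only: a c)
          also have "\<dots> = (u * (u - u ^ q) + 1) - (u * (u - u ^ q) + 1) + b"
            by (simp only: r3 e1)
          finally show ?thesis by simp
        qed
        thus ?thesis using p e1 by simp
      next
        assume "p \<in> ?T2"
        then obtain x y where p: "p = (x, y)" and xK: "x ^ q = x" and yK: "y ^ q = y"
          and e: "(x - y) ^ 3 = b" by auto
        have x1: "(x + 1) ^ q = x + 1" and y1: "(y + 1) ^ q = y + 1" using xK yK by (simp_all add: cj_add)
        have fx: "x ^ (q + 2) = x ^ 3" using xK by (rule fK)
        have fy: "y ^ (q + 2) = y ^ 3" using yK by (rule fK)
        have "x ^ (q + 2) - y ^ (q + 2) = x ^ 3 - y ^ 3" by (simp only: fx fy)
        also have "\<dots> = b" using e by (simp only: frob3_diff)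
        finally have "x ^ (q + 2) - y ^ (q + 2) = b" .
        moreover have "(x + 1) ^ (q + 2) - (y + 1) ^ (q + 2) = b"
        proof -
          have fx1: "(x + 1) ^ (q + 2) = (x + 1) ^ 3" using x1 by (rule fK)
          have fy1: "(y + 1) ^ (q + 2) = (y + 1) ^ 3" using y1 by (rule fK)
          have "(x + 1) ^ (q + 2) - (y + 1) ^ (q + 2) = (x + 1) ^ 3 - (y + 1) ^ 3" by (simp only: fx1 fy1)
          also have "\<dots> = ((x + 1) - (y + 1)) ^ 3" by (simp only: frob3_diff)
          also have "(x + 1) - (y + 1) = x - y" by simp
          finally show ?thesis using e by simp
        qed
        ultimately show ?thesis using p by simp
      qed
    qed
  qed
  have cT1: "card ?T1 = card ?H" by (rule card_image) (auto simp: inj_on_def)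
  show ?thesis
  proof (cases "b ^ q = b")
    case False
    have "?T2 = {}"
    proof (rule ccontr)
      assume "?T2 \<noteq> {}"
      then obtain x y where "x ^ q = x" "y ^ q = y" "(x - y) ^ 3 = b" by auto
      hence "b ^ q = b" by (metis cj_diff power_mult[symmetric] mult.commute power_mult)
      thus False using False by simp
    qed
    hence "card ?B = card ?H" using BT cT1 by (simp only: Un_empty_right)
    thus ?thesis using False by (simp only: if_False add_0_right)
  next
    case True
    obtain c where c3: "c ^ 3 = b" using cube_root by blast
    have cK: "c ^ q = c" using cube_K c3 True by simp
    have T2: "?T2 = (\<lambda>x. (x, x - c)) ` {x. x ^ q = x}"
    proof
      show "?T2 \<subseteq> (\<lambda>x. (x, x - c)) ` {x. x ^ q = x}"
      proof
        fix p assume "p \<in> ?T2"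
        then obtain x y where p: "p = (x, y)" "x ^ q = x" "y ^ q = y" "(x - y) ^ 3 = b" by auto
        hence "x - y = c" using c3 cube_inj by metis
        hence "y = x - c" by (simp add: algebra_simps)
        thus "p \<in> (\<lambda>x. (x, x - c)) ` {x. x ^ q = x}" using p by auto
      qed
      show "(\<lambda>x. (x, x - c)) ` {x. x ^ q = x} \<subseteq> ?T2"
        using c3 cK by (auto simp: cj_diff)
    qed
    have cT2: "card ?T2 = q" unfolding T2 by (subst card_image) (auto simp: inj_on_def K_card)
    have I: "?T1 \<inter> ?T2 = {(1 - c, 1 + c)}"
    proof
      show "?T1 \<inter> ?T2 \<subseteq> {(1 - c, 1 + c)}"
      proof
        fix p assume "p \<in> ?T1 \<inter> ?T2"
        then obtain u where p: "p = (u + 1, 1 - u)" and K1: "(u + 1) ^ q = u + 1"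
          and e: "((u + 1) - (1 - u)) ^ 3 = b" by auto
        have "u ^ q = u" using K1 by (simp add: cj_add)
        have "(u + 1) - (1 - u) = - u + 3 * u" by (simp add: algebra_simps)
        hence d: "(u + 1) - (1 - u) = - u" using three by simp
        have "(- u) ^ 3 = b" using e unfolding d .
        hence "(- u) ^ 3 = c ^ 3" using c3 by simp
        hence "- u = c" by (rule cube_inj)
        hence "u = - c" by (metis minus_minus)
        thus "p \<in> {(1 - c, 1 + c)}" using p by simp
      qed
      show "{(1 - c, 1 + c)} \<subseteq> ?T1 \<inter> ?T2"
      proof -
        have mK: "(- c) ^ q = - c" using cK by (simp add: cj_neg)
        have "(- c) - (- c) ^ q * ((- c) ^ 2 + 1) = b" using hK[OF mK] c3 by simp
        hence "(1 - c, 1 + c) \<in> ?T1"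
          by (intro image_eqI[of _ _ "- c"]) auto
        moreover have "(1 - c, 1 + c) \<in> ?T2"
        proof -
          have "(1 - c) - (1 + c) = c - 3 * c" by (simp add: algebra_simps)
          hence d2: "(1 - c) - (1 + c) = c" using three by simp
          have K1: "(1 - c) ^ q = 1 - c" and K2: "(1 + c) ^ q = 1 + c" using cK by (simp_all add: cj_add cj_diff)
          have e3: "((1 - c) - (1 + c)) ^ 3 = b" unfolding d2 by (rule c3)
          show ?thesis unfolding mem_Collect_eq prod.case using K1 K2 e3 by blast
        qed
        ultimately show ?thesis by simp
      qed
    qed
    have "card ?T1 + card ?T2 = card (?T1 \<union> ?T2) + card (?T1 \<inter> ?T2)"
      by (rule card_Un_Int) auto
    hence "card (?T1 \<union> ?T2) = card ?H + q - 1" using cT1 cT2 I by simp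
    hence "card ?B = card ?H + q - 1" using BT by (simp only:)
    moreover have "card ?H + q - 1 = card ?H + (q - 1)" using q3 by simp
    ultimately show ?thesis using True by (simp only: if_True simp_thms)
  qed
qed

end



context fsetting
begin

lemma quad_char3: "(u::'a) ^ 2 + b * u - 1 = 0 \<longleftrightarrow> (u - b) ^ 2 = b ^ 2 + 1"
proof -
  have "u ^ 2 + b * u - 1 = ((u - b) ^ 2 - (b ^ 2 + 1)) + 3 * (b * u)"
    by (simp add: algebra_simps power2_eq_square)
  hence e: "u ^ 2 + b * u - 1 = (u - b) ^ 2 - (b ^ 2 + 1)" using three by simp
  show ?thesis unfolding e by (rule right_minus_eq)
qed

lemma sq_eq_cases: "(x::'a) ^ 2 = y ^ 2 \<Longrightarrow> x = y \<or> x = - y"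
proof -
  assume "x ^ 2 = y ^ 2"
  hence "(x - y) * (x + y) = 0" by (simp add: algebra_simps power2_eq_square)
  thus ?thesis by (auto simp: add_eq_0_iff2)
qed

lemma sub_cases: "(x::'a) - b = t \<or> x - b = - t \<Longrightarrow> x = b + t \<or> x = b - t"
  by (metis diff_add_cancel add.commute diff_conv_add_uminus)

lemma Q_card:
  assumes bK: "(b::'a) ^ q = b"
  shows "card {u::'a. u ^ q \<noteq> u \<and> u ^ 2 + b * u - 1 = 0}
         = (if (\<exists>s::'a. s ^ q = s \<and> s ^ 2 = b ^ 2 + 1) then 0 else 2)"
proof (cases "\<exists>s::'a. s ^ q = s \<and> s ^ 2 = b ^ 2 + 1")
  case True
  then obtain s where s: "s ^ q = s" "s ^ 2 = b ^ 2 + 1" by blast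
  have "{u::'a. u ^ q \<noteq> u \<and> u ^ 2 + b * u - 1 = 0} = {}"
  proof (rule ccontr)
    assume "{u::'a. u ^ q \<noteq> u \<and> u ^ 2 + b * u - 1 = 0} \<noteq> {}"
    then obtain u where u: "u ^ q \<noteq> u" "u ^ 2 + b * u - 1 = 0" by blast
    hence "(u - b) ^ 2 = s ^ 2" using quad_char3 s by simp
    hence "u - b = s \<or> u - b = - s" by (rule sq_eq_cases)
    hence "u = b + s \<or> u = b - s" using sub_cases by blast
    moreover have "(b + s) ^ q = b + s" "(b - s) ^ q = b - s" using bK s by (simp_all add: cj_add cj_diff)
    ultimately have "u ^ q = u" by blast
    thus False using u by simp
  qed
  thus ?thesis using True by simp
next
  case False
  define d where "d = b ^ 2 + 1"
  have bb: "(b ^ 2) ^ q = (b ^ q) ^ 2" by (simp only: power_mult[symmetric] mult.commute)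
  have dK: "d ^ q = d" unfolding d_def using bK by (simp add: cj_add bb)
  have d0: "d \<noteq> 0"
  proof
    assume "d = 0"
    hence "(0::'a) ^ q = 0 \<and> (0::'a) ^ 2 = b ^ 2 + 1" using q3 by (simp add: d_def zero_power)
    thus False using False by blast
  qed
  obtain r where r: "r ^ 2 = d" using sq_in_L[OF dK d0] by blast
  have rK: "r ^ q \<noteq> r" using False r d_def by blast
  have r0: "r \<noteq> 0" using r d0 by auto
  have "{u::'a. u ^ q \<noteq> u \<and> u ^ 2 + b * u - 1 = 0} = {b + r, b - r}"
  proof
    show "{u::'a. u ^ q \<noteq> u \<and> u ^ 2 + b * u - 1 = 0} \<subseteq> {b + r, b - r}"
    proof
      fix u assume "u \<in> {u::'a. u ^ q \<noteq> u \<and> u ^ 2 + b * u - 1 = 0}"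
      hence "(u - b) ^ 2 = r ^ 2" using quad_char3 r d_def by simp
      hence "u - b = r \<or> u - b = - r" by (rule sq_eq_cases)
      hence "u = b + r \<or> u = b - r" using sub_cases by blast
      thus "u \<in> {b + r, b - r}" by blast
    qed
    show "{b + r, b - r} \<subseteq> {u::'a. u ^ q \<noteq> u \<and> u ^ 2 + b * u - 1 = 0}"
    proof -
      have "(b + r) ^ q \<noteq> b + r" using bK rK by (simp add: cj_add)
      moreover have "(b - r) ^ q \<noteq> b - r" using bK rK by (simp add: cj_diff)
      moreover have "(b + r) ^ 2 + b * (b + r) - 1 = 0"
        unfolding quad_char3 using r d_def by simp
      moreover have "(b - r) ^ 2 + b * (b - r) - 1 = 0"
        unfolding quad_char3 using r d_def by simp
      ultimately show ?thesis by blast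
    qed
  qed
  moreover have "b + r \<noteq> b - r"
  proof
    assume "b + r = b - r"
    hence "r + r = 0" by (simp add: algebra_simps)
    hence "2 * r = 0" by (subst mult_2)
    thus False using two_ne r0 by simp
  qed
  ultimately show ?thesis using False by simp
qed

lemma H_K:
  assumes b0: "(b::'a) \<noteq> 0" and bK: "b ^ q = b"
  shows "card {u::'a. u - u ^ q * (u ^ 2 + 1) = b}
         = (if (\<exists>s::'a. s ^ q = s \<and> s ^ 2 = b ^ 2 + 1) then 1 else 3)"
proof -
  obtain c where c3: "c ^ 3 = b" using cube_root by blast
  have cK: "c ^ q = c" using cube_K c3 bK by simp
  let ?Q = "{u::'a. u ^ q \<noteq> u \<and> u ^ 2 + b * u - 1 = 0}"
  have Heq: "{u::'a. u - u ^ q * (u ^ 2 + 1) = b} = insert (- c) ?Q"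
  proof
    show "{u::'a. u - u ^ q * (u ^ 2 + 1) = b} \<subseteq> insert (- c) ?Q"
    proof
      fix u assume "u \<in> {u::'a. u - u ^ q * (u ^ 2 + 1) = b}"
      hence hu: "u - u ^ q * (u ^ 2 + 1) = b" by simp
      show "u \<in> insert (- c) ?Q"
      proof (cases "u ^ q = u")
        case True
        hence "- (u ^ 3) = c ^ 3" using hK[OF True] hu c3 by simp
        hence "(- u) ^ 3 = c ^ 3" by simp
        hence "- u = c" by (rule cube_inj)
        hence "u = - c" by (metis minus_minus)
        thus ?thesis by simp
      next
        case False
        define w where "w = u ^ q"
        have h1: "u - w * (u ^ 2 + 1) = b" using hu w_def by simp
        have "(u - u ^ q * (u ^ 2 + 1)) ^ q = b ^ q" using hu by simp
        hence h2: "w - u * (w ^ 2 + 1) = b"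
          by (simp add: cj_diff cj_mult cj_add cj_cj w_def bK power2_eq_square)
        have "(u - w) * (2 - u * w) = (u - w * (u ^ 2 + 1)) - (w - u * (w ^ 2 + 1))"
          by (simp add: algebra_simps power2_eq_square)
        also have "\<dots> = 0" using h1 h2 by simp
        finally have "(u - w) * (2 - u * w) = 0" .
        moreover have "u - w \<noteq> 0" using False w_def by simp
        ultimately have uw: "u * w = 2" by simp
        have "b = u - (u * w) * u - w" using h1 by (simp add: algebra_simps power2_eq_square)
        hence "b = u - 2 * u - w" using uw by simp
        hence bw: "b = - u - w" by (simp add: algebra_simps)
        have "u ^ 2 + b * u - 1 = - (u * w) - 1" unfolding bw by (simp add: algebra_simps power2_eq_square)
        also have "\<dots> = - 3" using uw by simp
        finally have "u ^ 2 + b * u - 1 = 0" using three by simp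
        thus ?thesis using False by simp
      qed
    qed
    show "insert (- c) ?Q \<subseteq> {u::'a. u - u ^ q * (u ^ 2 + 1) = b}"
    proof
      fix u assume "u \<in> insert (- c) ?Q"
      thus "u \<in> {u::'a. u - u ^ q * (u ^ 2 + 1) = b}"
      proof
        assume u: "u = - c"
        have mK: "(- c) ^ q = - c" using cK by (simp add: cj_neg)
        show ?thesis using hK[OF mK] c3 u by simp
      next
        assume "u \<in> ?Q"
        hence nK: "u ^ q \<noteq> u" and qu: "u ^ 2 + b * u - 1 = 0" by auto
        define w where "w = u ^ q"
        have "(u ^ 2 + b * u - 1) ^ q = 0" using qu q3 by (simp add: zero_power)
        hence qw: "w ^ 2 + b * w - 1 = 0"
          by (simp add: cj_diff cj_mult cj_add w_def bK power_mult[symmetric] mult.commute)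
        have "(u - w) * (u + w + b) = (u ^ 2 + b * u - 1) - (w ^ 2 + b * w - 1)"
          by (simp add: algebra_simps power2_eq_square)
        also have "\<dots> = 0" using qu qw by simp
        finally have "(u - w) * (u + w + b) = 0" .
        moreover have "u - w \<noteq> 0" using nK w_def by simp
        ultimately have "u + w + b = 0" by simp
        hence wv: "w = - u - b" by (simp add: algebra_simps add_eq_0_iff2)
        have "u - w * (u ^ 2 + 1) - b = u * (u ^ 2 + b * u - 1) + 3 * u"
          unfolding wv by (simp add: algebra_simps power2_eq_square)
        hence "u - w * (u ^ 2 + 1) - b = 0" using qu three by simp
        thus ?thesis using w_def by simp
      qed
    qed
  qed
  have "- c \<notin> ?Q" using cK by (simp add: cj_neg)
  hence "card (insert (- c) ?Q) = 1 + card ?Q" by simp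
  thus ?thesis using Heq Q_card[OF bK] by simp
qed

end



context fsetting
begin

lemma phi_fiber:
  assumes t0: "(t::'a) \<noteq> 0" and t'0: "t' \<noteq> 0"
  shows "t' - inverse t' = t - inverse t \<longleftrightarrow> t' = t \<or> t' = - inverse t"
proof
  assume e: "t' - inverse t' = t - inverse t"
  have "(t' - t) * (t * t' + 1) = t * t' * ((t' - inverse t') - (t - inverse t))"
    using t0 t'0 by (simp add: field_simps)
  also have "\<dots> = 0" using e by simp
  finally have "(t' - t) * (t * t' + 1) = 0" .
  hence "t' = t \<or> t * t' = - 1" by (auto simp: add_eq_0_iff2)
  thus "t' = t \<or> t' = - inverse t"
  proof
    assume "t * t' = - 1"
    hence "t' = - 1 / t" using t0 by (simp add: field_simps)
    thus ?thesis by (simp add: divide_inverse)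
  qed simp
next
  assume "t' = t \<or> t' = - inverse t"
  thus "t' - inverse t' = t - inverse t" using t0 by auto
qed

lemma phi_image:
  "{b::'a. b ^ q = b \<and> (\<exists>s. s ^ q = s \<and> s ^ 2 = b ^ 2 + 1)}
   = (\<lambda>t. t - inverse t) ` ({x. x ^ q = x} - {0})"
proof
  show "{b::'a. b ^ q = b \<and> (\<exists>s. s ^ q = s \<and> s ^ 2 = b ^ 2 + 1)} \<subseteq> (\<lambda>t. t - inverse t) ` ({x. x ^ q = x} - {0})"
  proof
    fix b assume "b \<in> {b::'a. b ^ q = b \<and> (\<exists>s. s ^ q = s \<and> s ^ 2 = b ^ 2 + 1)}"
    then obtain s where bK: "b ^ q = b" and sK: "s ^ q = s" and ss: "s ^ 2 = b ^ 2 + 1" by auto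
    have p: "(s - b) * (s + b) = 1" using ss by (simp add: algebra_simps power2_eq_square)
    hence t0: "s - b \<noteq> 0" by auto
    have inv: "inverse (s - b) = s + b" using p by (rule inverse_unique)
    have "(s - b) - inverse (s - b) = b - 3 * b" unfolding inv by (simp add: algebra_simps)
    hence "b = (s - b) - inverse (s - b)" using three by simp
    moreover have "s - b \<in> {x. x ^ q = x} - {0}" using t0 bK sK by (simp add: cj_diff)
    ultimately show "b \<in> (\<lambda>t. t - inverse t) ` ({x. x ^ q = x} - {0})" by blast
  qed
  show "(\<lambda>t. t - inverse t) ` ({x. x ^ q = x} - {0}) \<subseteq> {b::'a. b ^ q = b \<and> (\<exists>s. s ^ q = s \<and> s ^ 2 = b ^ 2 + 1)}"
  proof
    fix b :: 'a assume "b \<in> (\<lambda>t. t - inverse t) ` ({x. x ^ q = x} - {0})"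
    then obtain t where tK: "t ^ q = t" and t0: "t \<noteq> 0" and b: "b = t - inverse t" by auto
    have "(t - inverse t) ^ q = t - inverse t" by (simp only: cj_diff cj_inv tK)
    hence bK: "b ^ q = b" using b by simp
    have sK: "(t + inverse t) ^ q = t + inverse t" using tK by (simp add: cj_add cj_inv)
    have "(t + inverse t) ^ 2 = (t - inverse t) ^ 2 + 4 * (t * inverse t)"
      by (simp add: algebra_simps power2_eq_square)
    also have "\<dots> = (t - inverse t) ^ 2 + 1 + 3" using t0 by simp
    finally have "(t + inverse t) ^ 2 = b ^ 2 + 1" using three b by simp
    thus "b \<in> {b::'a. b ^ q = b \<and> (\<exists>s. s ^ q = s \<and> s ^ 2 = b ^ 2 + 1)}" using bK sK by blast
  qed
qed

lemma neg_inv_K: "(t::'a) \<in> {x. x ^ q = x} - {0} \<Longrightarrow> - inverse t \<in> {x. x ^ q = x} - {0}"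
  by (simp add: cj_neg cj_inv)

lemma T_card:
  "card {b::'a. b ^ q = b \<and> \<not> (\<exists>s. s ^ q = s \<and> s ^ 2 = b ^ 2 + 1)}
   = (if even m then (q - 1) div 2 else (q + 1) div 2)"
proof -
  let ?K = "{x::'a. x ^ q = x}"
  let ?Ks = "?K - {0}"
  let ?I = "{b::'a. b ^ q = b \<and> (\<exists>s. s ^ q = s \<and> s ^ 2 = b ^ 2 + 1)}"
  let ?T = "{b::'a. b ^ q = b \<and> \<not> (\<exists>s. s ^ q = s \<and> s ^ 2 = b ^ 2 + 1)}"
  let ?phi = "\<lambda>t::'a. t - inverse t"
  have KIT: "?K = ?I \<union> ?T" and IT: "?I \<inter> ?T = {}" by auto
  have "card ?K = card ?I + card ?T"
    unfolding KIT by (rule card_Un_disjoint) (use IT in auto)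
  hence cT: "card ?T = q - card ?I" using K_card by simp
  have cKs: "card ?Ks = q - 1" by (rule K_star_card)
  obtain j where j: "q = 2 * j + 1" using qodd oddE by blast
  show ?thesis
  proof (cases "even m")
    case False
    have fib: "card {y\<in>?Ks. ?phi y = ?phi t} = 2" if t: "t \<in> ?Ks" for t
    proof -
      have "{y\<in>?Ks. ?phi y = ?phi t} = {t, - inverse t}"
        using phi_fiber[of t] t neg_inv_K[OF t] by auto
      moreover have "t \<noteq> - inverse t"
      proof
        assume "t = - inverse t"
        hence "t * t = - (t * inverse t)" by (metis minus_mult_right)
        hence "t ^ 2 = - 1" using t by (simp add: power2_eq_square)
        thus False using minus1_sq_odd[OF False] t by auto
      qed
      ultimately show ?thesis by simp
    qed
    have "card ?Ks = 2 * card (?phi ` ?Ks)" by (rule fiber_card) (use fib in auto)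
    hence "card ?I = j" using cKs j phi_image by simp
    thus ?thesis using cT False j by simp
  next
    case True
    obtain i where iK: "i ^ q = i" and ii: "i ^ 2 = (-1::'a)" using minus1_sq_even[OF True] by blast
    have i0: "i \<noteq> 0" using ii by auto
    have invi: "inverse i = - i"
      by (rule inverse_unique) (use ii in \<open>simp add: power2_eq_square\<close>)
    have ini: "i \<noteq> - i"
    proof
      assume "i = - i"
      hence "i + i = 0" by (metis add.right_inverse)
      hence "2 * i = 0" by (subst mult_2)
      thus False using two_ne i0 by simp
    qed
    have iKs: "i \<in> ?Ks" "- i \<in> ?Ks" using iK i0 by (simp_all add: cj_neg)
    let ?A = "?Ks - {i, - i}"
    have sqm1: "t ^ 2 = -1 \<Longrightarrow> t = i \<or> t = - i" for t :: 'a
      using sq_eq_cases[of t i] ii by simp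
    have fib: "card {y\<in>?A. ?phi y = ?phi t} = 2" if t: "t \<in> ?A" for t
    proof -
      have nt: "- inverse t \<notin> {i, - i}"
      proof
        assume "- inverse t \<in> {i, - i}"
        hence "inverse t = - i \<or> inverse t = i" by auto
        hence "t = inverse (- i) \<or> t = inverse i" by (metis inverse_inverse_eq)
        hence "t = i \<or> t = - i" using invi by auto
        thus False using t by auto
      qed
      have "{y\<in>?A. ?phi y = ?phi t} = {t, - inverse t}"
        using phi_fiber[of t] t neg_inv_K[of t] nt by auto
      moreover have "t \<noteq> - inverse t"
      proof
        assume "t = - inverse t"
        hence "t * t = - (t * inverse t)" by (metis minus_mult_right)
        hence "t ^ 2 = - 1" using t by (simp add: power2_eq_square)
        thus False using sqm1 t by auto
      qed
      ultimately show ?thesis by simp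
    qed
    have cA: "card ?A = 2 * card (?phi ` ?A)" by (rule fiber_card) (use fib in auto)
    have "card ?A = card ?Ks - 2" using iKs ini by (simp add: card_Diff_subset)
    hence cphiA: "card (?phi ` ?A) = j - 1" using cA cKs j by simp
    have "?phi i = - i + 3 * i" "?phi (- i) = i - 3 * i" using invi by (simp_all add: algebra_simps)
    hence phii: "?phi i = - i" "?phi (- i) = i" using three by simp_all
    have e: "?Ks = ?A \<union> {i, - i}" using iKs by auto
    have "?phi ` ?Ks = ?phi ` (?A \<union> {i, - i})" using e by (rule arg_cong)
    also have "\<dots> = ?phi ` ?A \<union> {?phi i, ?phi (- i)}" by (simp only: image_Un image_insert image_empty)
    finally have "?phi ` ?Ks = ?phi ` ?A \<union> {?phi i, ?phi (- i)}" .
    hence imgs: "?phi ` ?Ks = ?phi ` ?A \<union> {- i, i}" by (simp only: phii)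
    have disj: "?phi ` ?A \<inter> {- i, i} = {}"
    proof (rule ccontr)
      assume "?phi ` ?A \<inter> {- i, i} \<noteq> {}"
      then obtain t where t: "t \<in> ?A" and "?phi t = - i \<or> ?phi t = i" by blast
      hence "?phi t = ?phi i \<or> ?phi t = ?phi (- i)" by (metis phii)
      hence "t = i \<or> t = - inverse i \<or> t = - i \<or> t = - inverse (- i)"
        using phi_fiber[of i t] phi_fiber[of "- i" t] t i0 by auto
      hence "t = i \<or> t = - i" using invi by auto
      thus False using t by auto
    qed
    have "card (?phi ` ?Ks) = card (?phi ` ?A) + 2"
      unfolding imgs using disj ini by (subst card_Un_disjoint) auto
    hence "card ?I = j + 1" using cphiA phi_image j q3 by simp
    thus ?thesis using cT True j by simp
  qed
qed

end



lemma scale_count: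
  fixes a b :: "'a::{field,finite}"
  assumes a0: "a \<noteq> 0"
  shows "card {(x, y). x ^ n - y ^ n = b \<and> (x + a) ^ n - (y + a) ^ n = b}
       = card {(x, y). x ^ n - y ^ n = b / a ^ n \<and> (x + 1) ^ n - (y + 1) ^ n = b / a ^ n}"
proof -
  let ?L = "{(x, y). x ^ n - y ^ n = b \<and> (x + a) ^ n - (y + a) ^ n = b}"
  let ?R = "{(x, y). x ^ n - y ^ n = b / a ^ n \<and> (x + 1) ^ n - (y + 1) ^ n = b / a ^ n}"
  let ?g = "\<lambda>(x, y). (a * x, a * y)"
  have an: "a ^ n \<noteq> 0" using a0 by simp
  have "?L = ?g ` ?R"
  proof
    show "?L \<subseteq> ?g ` ?R"
    proof
      fix p assume "p \<in> ?L"
      then obtain x y where p: "p = (x, y)" and e1: "x ^ n - y ^ n = b"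
        and e2: "(x + a) ^ n - (y + a) ^ n = b" by auto
      have "(x / a) ^ n - (y / a) ^ n = (x ^ n - y ^ n) / a ^ n" by (simp add: power_divide diff_divide_distrib)
      hence r1: "(x / a) ^ n - (y / a) ^ n = b / a ^ n" using e1 by simp
      have "x / a + 1 = (x + a) / a" "y / a + 1 = (y + a) / a" using a0 by (simp_all add: field_simps)
      hence "(x / a + 1) ^ n - (y / a + 1) ^ n = ((x + a) ^ n - (y + a) ^ n) / a ^ n"
        by (simp add: power_divide diff_divide_distrib)
      hence r2: "(x / a + 1) ^ n - (y / a + 1) ^ n = b / a ^ n" using e2 by simp
      have "(x / a, y / a) \<in> ?R" using r1 r2 by simp
      moreover have "p = ?g (x / a, y / a)" using p a0 by simp
      ultimately show "p \<in> ?g ` ?R" by blast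
    qed
    show "?g ` ?R \<subseteq> ?L"
    proof
      fix p assume "p \<in> ?g ` ?R"
      then obtain x y where p: "p = (a * x, a * y)" and e1: "x ^ n - y ^ n = b / a ^ n"
        and e2: "(x + 1) ^ n - (y + 1) ^ n = b / a ^ n" by auto
      have "(a * x) ^ n - (a * y) ^ n = a ^ n * (x ^ n - y ^ n)" by (simp add: power_mult_distrib algebra_simps)
      also have "\<dots> = a ^ n * (b / a ^ n)" using e1 by simp
      also have "\<dots> = b" using an by simp
      finally have r1: "(a * x) ^ n - (a * y) ^ n = b" .
      have ex: "a * x + a = a * (x + 1)" and ey: "a * y + a = a * (y + 1)" by (simp_all add: algebra_simps)
      have "(a * x + a) ^ n - (a * y + a) ^ n = a ^ n * ((x + 1) ^ n - (y + 1) ^ n)"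
        by (simp only: ex ey power_mult_distrib right_diff_distrib)
      also have "\<dots> = a ^ n * (b / a ^ n)" using e2 by simp
      also have "\<dots> = b" using an by simp
      finally have r2: "(a * x + a) ^ n - (a * y + a) ^ n = b" .
      show "p \<in> ?L" using p r1 r2 by simp
    qed
  qed
  moreover have "inj_on ?g ?R" using a0 by (auto simp: inj_on_def)
  ultimately show ?thesis by (simp add: card_image)
qed

context fsetting
begin

lemma Bval:
  assumes b0: "(b::'a) \<noteq> 0"
  shows "card {(x, y). x ^ (q + 2) - y ^ (q + 2) = b \<and> (x + 1) ^ (q + 2) - (y + 1) ^ (q + 2) = b}
       = (if b ^ q = b then (if (\<exists>s::'a. s ^ q = s \<and> s ^ 2 = b ^ 2 + 1) then q else q + 2)
          else card {u::'a. u - u ^ q * (u ^ 2 + 1) = b})"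
proof (cases "b ^ q = b")
  case True
  thus ?thesis using count_main[OF b0] H_K[OF b0 True] q3 by auto
next
  case False
  thus ?thesis using count_main[OF b0] by simp
qed

lemma B_le: "(b::'a) \<noteq> 0 \<Longrightarrow>
   card {(x, y). x ^ (q + 2) - y ^ (q + 2) = b \<and> (x + 1) ^ (q + 2) - (y + 1) ^ (q + 2) = b} \<le> q + 2"
  using Bval[of b] Hbound[of b] q3 by (auto split: if_splits)

lemma T_sub: "{b::'a. b ^ q = b \<and> \<not> (\<exists>s. s ^ q = s \<and> s ^ 2 = b ^ 2 + 1)} \<subseteq> {x. x ^ q = x} - {0}"
proof
  fix b :: 'a assume b: "b \<in> {b::'a. b ^ q = b \<and> \<not> (\<exists>s. s ^ q = s \<and> s ^ 2 = b ^ 2 + 1)}"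
  have "b \<noteq> 0"
  proof
    assume "b = 0"
    hence "(1::'a) ^ q = 1 \<and> (1::'a) ^ 2 = b ^ 2 + 1" by simp
    thus False using b by blast
  qed
  thus "b \<in> {x. x ^ q = x} - {0}" using b by simp
qed

lemma B_top1: "(b::'a) \<noteq> 0 \<Longrightarrow> b \<in> {b::'a. b ^ q = b \<and> \<not> (\<exists>s. s ^ q = s \<and> s ^ 2 = b ^ 2 + 1)} \<Longrightarrow>
   card {(x, y). x ^ (q + 2) - y ^ (q + 2) = b \<and> (x + 1) ^ (q + 2) - (y + 1) ^ (q + 2) = b} = q + 2"
  using Bval[of b] by auto

lemma B_top: "(b::'a) \<noteq> 0 \<Longrightarrow> q \<ge> 9 \<Longrightarrow>
   card {(x, y). x ^ (q + 2) - y ^ (q + 2) = b \<and> (x + 1) ^ (q + 2) - (y + 1) ^ (q + 2) = b} = q + 2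
   \<longleftrightarrow> b \<in> {b::'a. b ^ q = b \<and> \<not> (\<exists>s. s ^ q = s \<and> s ^ 2 = b ^ 2 + 1)}"
  using Bval[of b] Hbound[of b] q3 by (auto split: if_splits)

lemma B_q: "(b::'a) \<noteq> 0 \<Longrightarrow> q \<ge> 9 \<Longrightarrow>
   card {(x, y). x ^ (q + 2) - y ^ (q + 2) = b \<and> (x + 1) ^ (q + 2) - (y + 1) ^ (q + 2) = b} = q
   \<longleftrightarrow> b \<in> ({x. x ^ q = x} - {0}) - {b::'a. b ^ q = b \<and> \<not> (\<exists>s. s ^ q = s \<and> s ^ 2 = b ^ 2 + 1)}"
  using Bval[of b] Hbound[of b] q3 by (auto split: if_splits)

end

theorem theorem8:
  fixes m q :: nat and f :: "'a::{field,finite} \<Rightarrow> 'a"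
  assumes "m \<ge> 1" and "q = 3 ^ m" and "card (UNIV :: 'a set) = q ^ 2"
    and "f = (\<lambda>x. x ^ (q + 2))"
  shows "boomerang_uniformity f = q + 2
       \<and> (q \<ge> 9 \<longrightarrow>
            boomerang_spectrum f (q + 2) = (if even m then (q - 1) div 2 else (q + 1) div 2)
          \<and> boomerang_spectrum f q = (if even m then (q - 1) div 2 else (q - 3) div 2))"
proof -
  interpret S: fsetting m q "TYPE('a)" by unfold_locales (use assms in auto)
  let ?T = "{b::'a. b ^ q = b \<and> \<not> (\<exists>s. s ^ q = s \<and> s ^ 2 = b ^ 2 + 1)}"
  let ?Ks = "{x::'a. x ^ q = x} - {0}"
  have cnt: "boomerang_count f a b = card {(x, y). x ^ (q + 2) - y ^ (q + 2) = b \<and> (x + a) ^ (q + 2) - (y + a) ^ (q + 2) = b}"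
    for a b :: 'a
    by (simp only: boomerang_count_def assms(4))
  have cnt1: "boomerang_count f 1 b = card {(x, y). x ^ (q + 2) - y ^ (q + 2) = b \<and> (x + 1) ^ (q + 2) - (y + 1) ^ (q + 2) = b}"
    for b :: 'a using cnt[of 1 b] .
  have cntT: "card ?T = (if even m then (q - 1) div 2 else (q + 1) div 2)" by (rule S.T_card)
  obtain j where j: "q = 2 * j + 1" using S.qodd oddE by blast
  have q3: "q \<ge> 3" by (rule S.q3)
  have "(if even m then (q - 1) div 2 else (q + 1) div 2) > 0" using j q3 by simp
  hence "card ?T > 0" using cntT by (simp only:)
  hence Tne: "?T \<noteq> {}" by (metis card.empty less_irrefl)
  then obtain b0 where b0: "b0 \<in> ?T" by blast
  have b00: "b0 \<noteq> 0" using S.T_sub b0 by auto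
  have unif: "boomerang_uniformity f = q + 2"
    unfolding boomerang_uniformity_def
  proof (rule Max_eqI)
    show "finite {boomerang_count f a b |a b. a \<noteq> 0 \<and> b \<noteq> 0}"
    proof (rule finite_subset)
      show "{boomerang_count f a b |a b. a \<noteq> 0 \<and> b \<noteq> 0} \<subseteq> (\<lambda>p. boomerang_count f (fst p) (snd p)) ` UNIV"
      proof
        fix z assume "z \<in> {boomerang_count f a b |a b. a \<noteq> 0 \<and> b \<noteq> 0}"
        then obtain a b where "z = boomerang_count f a b" by blast
        hence "z = (\<lambda>p. boomerang_count f (fst p) (snd p)) (a, b)" by simp
        thus "z \<in> (\<lambda>p. boomerang_count f (fst p) (snd p)) ` UNIV" by (rule image_eqI) simp
      qed
    qed simp
    show "y \<le> q + 2" if yin: "y \<in> {boomerang_count f a b |a b. a \<noteq> 0 \<and> b \<noteq> 0}" for y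
    proof -
      obtain a b where y: "y = boomerang_count f a b" and a: "a \<noteq> 0" and b: "b \<noteq> 0" using yin by blast
      have "y = card {(x, y). x ^ (q + 2) - y ^ (q + 2) = b \<and> (x + a) ^ (q + 2) - (y + a) ^ (q + 2) = b}"
        using y cnt[of a b] by (rule trans)
      also have "\<dots> = card {(x, y). x ^ (q + 2) - y ^ (q + 2) = b / a ^ (q + 2) \<and> (x + 1) ^ (q + 2) - (y + 1) ^ (q + 2) = b / a ^ (q + 2)}"
        by (rule scale_count[OF a])
      finally have yeq: "y = card {(x, y). x ^ (q + 2) - y ^ (q + 2) = b / a ^ (q + 2) \<and> (x + 1) ^ (q + 2) - (y + 1) ^ (q + 2) = b / a ^ (q + 2)}" .
      have nz: "b / a ^ (q + 2) \<noteq> 0" using a b by simp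
      show ?thesis unfolding yeq using nz by (rule S.B_le)
    qed
    show "q + 2 \<in> {boomerang_count f a b |a b. a \<noteq> 0 \<and> b \<noteq> 0}"
    proof -
      have "boomerang_count f 1 b0 = q + 2" using cnt1[of b0] S.B_top1[OF b00 b0] by (rule trans)
      hence "q + 2 = boomerang_count f 1 b0 \<and> (1::'a) \<noteq> 0 \<and> b0 \<noteq> 0" using b00 by simp
      thus ?thesis by blast
    qed
  qed
  have memT: "b \<in> {b. b \<noteq> 0 \<and> boomerang_count f 1 b = q + 2} \<longleftrightarrow> b \<in> ?T" if q9: "q \<ge> 9" for b
  proof (cases "b = 0")
    case True
    have "(0::'a) \<notin> ?T" using S.T_sub by blast
    thus ?thesis using True by simp
  next
    case False
    have "boomerang_count f 1 b = q + 2 \<longleftrightarrow> b \<in> ?T"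
      using cnt1[of b] S.B_top[OF False q9] by (simp only:)
    thus ?thesis using False by simp
  qed
  have memQ: "b \<in> {b. b \<noteq> 0 \<and> boomerang_count f 1 b = q} \<longleftrightarrow> b \<in> ?Ks - ?T" if q9: "q \<ge> 9" for b
  proof (cases "b = 0")
    case True
    thus ?thesis by auto
  next
    case False
    have "boomerang_count f 1 b = q \<longleftrightarrow> b \<in> ?Ks - ?T"
      using cnt1[of b] S.B_q[OF False q9] by (simp only:)
    thus ?thesis using False by simp
  qed
  have sp1: "boomerang_spectrum f (q + 2) = card ?T" if q9: "q \<ge> 9"
  proof -
    have "{b. b \<noteq> 0 \<and> boomerang_count f 1 b = q + 2} = ?T"
      by (rule set_eqI) (rule memT[OF q9])
    thus ?thesis unfolding boomerang_spectrum_def by (simp only:)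
  qed
  have sp2: "boomerang_spectrum f q = q - 1 - card ?T" if q9: "q \<ge> 9"
  proof -
    have "{b. b \<noteq> 0 \<and> boomerang_count f 1 b = q} = ?Ks - ?T"
      by (rule set_eqI) (rule memQ[OF q9])
    hence "boomerang_spectrum f q = card (?Ks - ?T)" unfolding boomerang_spectrum_def by (simp only:)
    also have "\<dots> = card ?Ks - card ?T" using S.T_sub by (intro card_Diff_subset) auto
    also have "card ?Ks = q - 1" by (rule S.K_star_card)
    finally show ?thesis .
  qed
  have part2: "q \<ge> 9 \<longrightarrow>
            boomerang_spectrum f (q + 2) = (if even m then (q - 1) div 2 else (q + 1) div 2)
          \<and> boomerang_spectrum f q = (if even m then (q - 1) div 2 else (q - 3) div 2)"
  proof
    assume q9: "q \<ge> 9"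
    show "boomerang_spectrum f (q + 2) = (if even m then (q - 1) div 2 else (q + 1) div 2)
          \<and> boomerang_spectrum f q = (if even m then (q - 1) div 2 else (q - 3) div 2)"
    proof (cases "even m")
      case True
      have cT: "card ?T = (q - 1) div 2" using cntT True by (simp only: if_True simp_thms)
      have "q - 1 - (q - 1) div 2 = (q - 1) div 2" using j by simp
      thus ?thesis using sp1[OF q9] sp2[OF q9] cT True by (simp only: if_True simp_thms)
    next
      case False
      have cT: "card ?T = (q + 1) div 2" using cntT False by (simp only: if_False simp_thms)
      have "q - 1 - (q + 1) div 2 = (q - 3) div 2" using j by simp
      thus ?thesis using sp1[OF q9] sp2[OF q9] cT False by (simp only: if_False simp_thms)
    qed
  qed
  show ?thesis using unif part2 by (rule conjI)
qed

end
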